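(* Let $\mathrm{ReLU}:\mathbb{R}\to\mathbb{R}$ be $\mathrm{ReLU}(x)=\max(x,0)$, and let \[ \mathcal{X}:=\mathrm{Span}\left(\left\{\mathrm{ReLU}(a\,\cdot+b)\,:\, a\in\mathbb{R}\setminus\{0\},\ b\in\mathbb{R}\right\}\right), \] the set of all finite real linear combinations of the functions $x\mapsto \mathrm{ReLU}(ax+b)$ with $a\neq 0$, $b\in\mathbb{R}$. Let \[ \mathcal{Y}:=\left\{f\in C(\mathbb{R})\,:\, \lim_{x\to+\infty}\frac{f(x)}{1+|x|}\ \text{and}\ \lim_{x\to-\infty}\frac{f(x)}{1+|x|}\ \text{both exist in } \mathbb{R}\right\}, \] equipped with the norm \[ \|f\|_{\mathcal{Y}}:=\sup_{x\in\mathbb{R}}\frac{|f(x)|}{1+|x|}. \] Then $\mathcal{X}\subset\mathcal{Y}$ and $\mathcal{X}$ is dense in $\mathcal{Y}$ with respect to $\|\cdot\|_{\mathcal{Y}}$: for every $f\in\mathcal{Y}$ and every $\varepsilon>0$ there exists $h\in\mathcal{X}$ with $\|f-h\|_{\mathcal{Y}}<\varepsilon$.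
   Context: $C(\mathbb{R})$ denotes the space of continuous real-valued functions on $\mathbb{R}$. Elements of $\mathcal{X}$ are two-layer feed-forward neural networks with ReLU activation. *)

theory Defs
  imports "HOL-Analysis.Analysis"
begin

definition relu :: "real \<Rightarrow> real" where
  "relu x = max x 0"

definition ReLU_X :: "(real \<Rightarrow> real) set" where
  "ReLU_X = {h. \<exists>(n::nat) (c::nat \<Rightarrow> real) (a::nat \<Rightarrow> real) (b::nat \<Rightarrow> real).
      (\<forall>i<n. a i \<noteq> 0) \<and> h = (\<lambda>x. \<Sum>i<n. c i * relu (a i * x + b i))}"

definition Y_space :: "(real \<Rightarrow> real) set" where
  "Y_space = {f. continuous_on UNIV f \<and>
      (\<exists>L::real. ((\<lambda>x. f x / (1 + \<bar>x\<bar>)) \<longlongrightarrow> L) at_top) \<and>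
      (\<exists>L::real. ((\<lambda>x. f x / (1 + \<bar>x\<bar>)) \<longlongrightarrow> L) at_bot)}"

definition Y_norm :: "(real \<Rightarrow> real) \<Rightarrow> real" where
  "Y_norm f = (SUP x. \<bar>f x\<bar> / (1 + \<bar>x\<bar>))"

end

theory Submission imports Defs begin

lemma sum_split_nat: "(\<Sum>i<n+m. F i) = (\<Sum>i<n. F i) + (\<Sum>i<m. F (n+i::nat)) " for F :: "nat \<Rightarrow> real"
  by (induction m) (simp_all add: add.assoc)

lemma X_add: assumes "p \<in> ReLU_X" "q \<in> ReLU_X" shows "(\<lambda>x. p x + q x) \<in> ReLU_X"
proof -
  obtain n :: nat and c a b where 1: "\<forall>i<n. a i \<noteq> 0" "p = (\<lambda>x. \<Sum>i<n. c i * relu (a i * x + b i))"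
    using assms(1) unfolding ReLU_X_def mem_Collect_eq by (elim exE conjE) blast
  obtain m :: nat and c' a' b' where 2: "\<forall>i<m. a' i \<noteq> 0" "q = (\<lambda>x. \<Sum>i<m. c' i * relu (a' i * x + b' i))"
    using assms(2) unfolding ReLU_X_def mem_Collect_eq by (elim exE conjE) blast
  define C where "C = (\<lambda>i. if i < n then c i else c' (i - n))"
  define A where "A = (\<lambda>i. if i < n then a i else a' (i - n))"
  define B where "B = (\<lambda>i. if i < n then b i else b' (i - n))"
  have "\<forall>i<n+m. A i \<noteq> 0" using 1 2 by (auto simp: A_def)
  moreover have "(\<lambda>x. p x + q x) = (\<lambda>x. \<Sum>i<n+m. C i * relu (A i * x + B i))"
    unfolding sum_split_nat 1 2 C_def A_def B_def by simp
  ultimately show ?thesis unfolding ReLU_X_def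
    by (intro CollectI exI[of _ "n+m"] exI[of _ C] exI[of _ A] exI[of _ B]) simp
qed

lemma X_scale: assumes "p \<in> ReLU_X" shows "(\<lambda>x. k * p x) \<in> ReLU_X"
proof -
  obtain n :: nat and c a b where 1: "\<forall>i<n. a i \<noteq> 0" "p = (\<lambda>x. \<Sum>i<n. c i * relu (a i * x + b i))"
    using assms(1) unfolding ReLU_X_def mem_Collect_eq by (elim exE conjE) blast
  have "(\<lambda>x. k * p x) = (\<lambda>x. \<Sum>i<n. (k * c i) * relu (a i * x + b i))"
    unfolding 1 by (simp add: sum_distrib_left mult.assoc)
  then show ?thesis using 1 unfolding ReLU_X_def
    by (intro CollectI exI[of _ n] exI[of _ "\<lambda>i. k * c i"] exI[of _ a] exI[of _ b]) simp
qed

lemma X_relu: assumes "a \<noteq> 0" shows "(\<lambda>x. relu (a * x + b)) \<in> ReLU_X"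
proof -
  have "(\<lambda>x. relu (a * x + b)) = (\<lambda>x. \<Sum>i<(1::nat). (\<lambda>_. 1) i * relu ((\<lambda>_. a) i * x + (\<lambda>_. b) i))"
    by (simp add: fun_eq_iff)
  then show ?thesis using assms unfolding ReLU_X_def
    by (intro CollectI exI[of _ "1::nat"] exI[of _ "\<lambda>_. 1"] exI[of _ "\<lambda>_. a"] exI[of _ "\<lambda>_. b"]) simp
qed

lemma X_const: "(\<lambda>x. k) \<in> ReLU_X"
proof -
  have r: "(\<lambda>x. c * relu (a*x+b)) \<in> ReLU_X" if "a \<noteq> 0" for a b c :: real
    using X_scale[OF X_relu[OF that]] .
  have r1: "(\<lambda>x. k * relu (1*x+1)) \<in> ReLU_X" by (rule r) simp
  have r2: "(\<lambda>x. (-k) * relu ((-1)*x+(-1))) \<in> ReLU_X" by (rule r) simp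
  have r3: "(\<lambda>x. (-k) * relu (1*x+0)) \<in> ReLU_X" by (rule r) simp
  have r4: "(\<lambda>x. k * relu ((-1)*x+0)) \<in> ReLU_X" by (rule r) simp
  have P: "(\<lambda>x. k * relu (1*x+1) + (-k) * relu ((-1)*x+(-1)) + (-k) * relu (1*x+0) + k * relu ((-1)*x+0)) \<in> ReLU_X"
    using X_add[OF X_add[OF X_add[OF r1 r2] r3] r4] by simp
  have e: "(\<lambda>x::real. k) = (\<lambda>x. k * relu (1*x+1) + (-k) * relu ((-1)*x+(-1)) + (-k) * relu (1*x+0) + k * relu ((-1)*x+0))"
  proof (rule ext)
    fix x :: real
    have h1: "relu (1*x+1) - relu ((-1)*x + (-1)) - relu (1*x+0) + relu ((-1)*x+0) = 1"
      by (auto simp: relu_def max_def)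
    have "k = k * (relu (1*x+1) - relu ((-1)*x + (-1)) - relu (1*x+0) + relu ((-1)*x+0))"
      unfolding h1 by simp
    then show "k = k * relu (1*x+1) + (-k) * relu ((-1)*x+(-1)) + (-k) * relu (1*x+0) + k * relu ((-1)*x+0)"
      by (simp add: algebra_simps)
  qed
  show ?thesis unfolding e by (rule P)
qed

lemma relu_lim_top: assumes "a \<noteq> 0"
  shows "((\<lambda>x. relu (a*x+b) / (1 + \<bar>x\<bar>)) \<longlongrightarrow> max a 0) at_top"
proof (cases "a > 0")
  case True
  have ev: "eventually (\<lambda>x. (a*x+b)/(1+x) = relu (a*x+b) / (1 + \<bar>x\<bar>)) at_top"
    using eventually_gt_at_top[of "max 0 (-b/a)"]
  proof (rule eventually_mono)
    fix x assume "x > max 0 (-b/a)"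
    then have "x > 0" "a*x > -b" using True by (auto simp: field_simps)
    then show "(a*x+b)/(1+x) = relu (a*x+b) / (1 + \<bar>x\<bar>)" by (simp add: relu_def)
  qed
  have inf: "filterlim (\<lambda>x::real. 1 + x) at_infinity at_top"
    by (intro filterlim_at_top_imp_at_infinity filterlim_tendsto_add_at_top[OF tendsto_const filterlim_ident])
  have l0: "((\<lambda>x. a + (b - a)/(1+x)) \<longlongrightarrow> a + 0) at_top"
    by (intro tendsto_add tendsto_const tendsto_divide_0[OF tendsto_const inf])
  have e0: "eventually (\<lambda>x. a + (b - a)/(1+x) = (a*x+b)/(1+x)) at_top"
    using eventually_gt_at_top[of 0] by eventually_elim (simp add: field_simps)
  have "((\<lambda>x. (a*x+b)/(1+x)) \<longlongrightarrow> a + 0) at_top"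
    by (rule Lim_transform_eventually[OF l0 e0])
  then show ?thesis using ev True by (simp add: tendsto_cong)
next
  case False
  then have an: "a < 0" using assms by simp
  have ev: "eventually (\<lambda>x. 0 = relu (a*x+b) / (1 + \<bar>x\<bar>)) at_top"
    using eventually_gt_at_top[of "max 0 (-b/a)"]
  proof (rule eventually_mono)
    fix x assume "x > max 0 (-b/a)"
    then have "a*x < -b" using an by (auto simp: field_simps)
    then show "0 = relu (a*x+b) / (1 + \<bar>x\<bar>)" by (simp add: relu_def)
  qed
  show ?thesis using Lim_transform_eventually[OF tendsto_const ev] an by simp
qed

lemma relu_lim_bot: assumes "a \<noteq> 0"
  shows "((\<lambda>x. relu (a*x+b) / (1 + \<bar>x\<bar>)) \<longlongrightarrow> max (-a) 0) at_bot"
  unfolding filterlim_at_bot_mirror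
  using relu_lim_top[of "-a" b] assms by simp


lemma interp:
  fixes g :: "real \<Rightarrow> real" and t0 d \<eta> :: real
  assumes d: "d > 0"
  shows "(\<forall>x y. t0 \<le> x \<and> x \<le> t0 + real n * d \<and> t0 \<le> y \<and> y \<le> t0 + real n * d \<and> \<bar>x - y\<bar> \<le> d \<longrightarrow> \<bar>g x - g y\<bar> \<le> \<eta>) \<Longrightarrow>
   \<exists>p\<in>ReLU_X. (\<forall>x\<le>t0. p x = g t0) \<and> (\<forall>x\<ge>t0 + real n * d. p x = g (t0 + real n*d)) \<and>
      (\<forall>x. t0 \<le> x \<and> x \<le> t0 + real n*d \<longrightarrow> \<bar>p x - g x\<bar> \<le> \<eta>)"
proof (induction n)
  case 0
  have "\<eta> \<ge> 0" using 0[rule_format, of t0 t0] d by simp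
  then show ?case using X_const[of "g t0"] by (intro bexI[of _ "\<lambda>x. g t0"]) auto
next
  case (Suc n)
  define T where "T = t0 + real n * d"
  define T' where "T' = T + d"
  have TT': "t0 + real (Suc n) * d = T'" unfolding T_def T'_def by (simp add: algebra_simps)
  have t0T: "t0 \<le> T" unfolding T_def using d by simp
  have H: "\<And>x y. t0 \<le> x \<Longrightarrow> x \<le> T' \<Longrightarrow> t0 \<le> y \<Longrightarrow> y \<le> T' \<Longrightarrow> \<bar>x - y\<bar> \<le> d \<Longrightarrow> \<bar>g x - g y\<bar> \<le> \<eta>"
    using Suc.prems unfolding TT' by blast
  have "\<forall>x y. t0 \<le> x \<and> x \<le> T \<and> t0 \<le> y \<and> y \<le> T \<and> \<bar>x - y\<bar> \<le> d \<longrightarrow> \<bar>g x - g y\<bar> \<le> \<eta>"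
    using H unfolding T'_def using d by auto
  then obtain p where pX: "p \<in> ReLU_X" and p1: "\<forall>x\<le>t0. p x = g t0" and p2: "\<forall>x\<ge>T. p x = g T"
      and p3: "\<forall>x. t0 \<le> x \<and> x \<le> T \<longrightarrow> \<bar>p x - g x\<bar> \<le> \<eta>"
    using Suc.IH unfolding T_def by blast
  define s where "s = (g T' - g T) / d"
  define q where "q = (\<lambda>x. (\<lambda>x. p x + (\<lambda>x. s * relu (1*x + (-T))) x) x + (\<lambda>x. (-s) * relu (1*x + (-T'))) x)"
  have qX: "q \<in> ReLU_X" unfolding q_def
    by (intro X_add pX X_scale X_relu) simp_all
  have qe: "q x = p x + s * relu (x - T) - s * relu (x - T')" for x
    unfolding q_def by simp
  have c1: "q x = g t0" if "x \<le> t0" for x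
    using that t0T d p1 unfolding qe T'_def relu_def by auto
  have c2: "q x = g T'" if "x \<ge> T'" for x
  proof -
    have "x \<ge> T" using that d unfolding T'_def by simp
    then have "q x = g T + s * d" using that unfolding qe relu_def T'_def by (simp add: p2 algebra_simps)
    then show ?thesis unfolding s_def using d by simp
  qed
  have c3: "\<bar>q x - g x\<bar> \<le> \<eta>" if "t0 \<le> x" "x \<le> T'" for x
  proof (cases "x \<le> T")
    case True
    then show ?thesis using p3 that d unfolding qe relu_def T'_def by auto
  next
    case False
    define \<theta> where "\<theta> = (x - T) / d"
    have th0: "0 \<le> \<theta>" "\<theta> \<le> 1" using False that d unfolding \<theta>_def T'_def by (auto simp: field_simps)
    have "q x = g T + s * (x - T)" using False that p2 unfolding qe relu_def T'_def by auto
    then have "q x - g x = (g T - g x) + \<theta> * (g T' - g T)"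
      unfolding s_def \<theta>_def using d by simp
    also have "\<dots> = (1 - \<theta>) * (g T - g x) + \<theta> * (g T' - g x)"
      by (simp add: algebra_simps)
    finally have eq: "q x - g x = (1 - \<theta>) * (g T - g x) + \<theta> * (g T' - g x)" .
    have A: "\<bar>g T - g x\<bar> \<le> \<eta>" using H[of T x] t0T that False d unfolding T'_def by auto
    have B: "\<bar>g T' - g x\<bar> \<le> \<eta>" using H[of T' x] t0T that False d unfolding T'_def by auto
    have "\<bar>q x - g x\<bar> \<le> \<bar>(1 - \<theta>) * (g T - g x)\<bar> + \<bar>\<theta> * (g T' - g x)\<bar>"
      unfolding eq by (rule abs_triangle_ineq)
    also have "\<dots> = (1 - \<theta>) * \<bar>g T - g x\<bar> + \<theta> * \<bar>g T' - g x\<bar>"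
      using th0 by (simp add: abs_mult)
    also have "\<dots> \<le> (1 - \<theta>) * \<eta> + \<theta> * \<eta>"
      using th0 A B by (intro add_mono mult_left_mono) auto
    also have "\<dots> = \<eta>" by (simp add: algebra_simps)
    finally show ?thesis .
  qed
  show ?case unfolding TT' using qX c1 c2 c3 by blast
qed


lemma X_sub_Y: "ReLU_X \<subseteq> Y_space"
proof
  fix h assume "h \<in> ReLU_X"
  then obtain n :: nat and c a b where 1: "\<forall>i<n. a i \<noteq> 0" "h = (\<lambda>x. \<Sum>i<n. c i * relu (a i * x + b i))"
    unfolding ReLU_X_def mem_Collect_eq by (elim exE conjE) blast
  have cont: "continuous_on UNIV h" unfolding 1 relu_def by (intro continuous_intros)
  have eq: "(\<lambda>x. h x / (1 + \<bar>x\<bar>)) = (\<lambda>x. \<Sum>i<n. c i * (relu (a i * x + b i) / (1 + \<bar>x\<bar>)))"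
    unfolding 1 by (simp add: sum_divide_distrib)
  have "((\<lambda>x. h x / (1 + \<bar>x\<bar>)) \<longlongrightarrow> (\<Sum>i<n. c i * max (a i) 0)) at_top"
    unfolding eq using 1(1) by (intro tendsto_sum tendsto_mult_left relu_lim_top) auto
  moreover have "((\<lambda>x. h x / (1 + \<bar>x\<bar>)) \<longlongrightarrow> (\<Sum>i<n. c i * max (- a i) 0)) at_bot"
    unfolding eq using 1(1) by (intro tendsto_sum tendsto_mult_left relu_lim_bot) auto
  ultimately show "h \<in> Y_space" unfolding Y_space_def using cont by blast
qed

lemma dense: assumes fY: "f \<in> Y_space" and ep: "\<epsilon> > 0"
  shows "\<exists>h\<in>ReLU_X. Y_norm (\<lambda>x. f x - h x) < \<epsilon>"
proof -
  obtain L1 L2 where cf: "continuous_on UNIV f"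
    and l1: "((\<lambda>x. f x / (1 + \<bar>x\<bar>)) \<longlongrightarrow> L1) at_top"
    and l2: "((\<lambda>x. f x / (1 + \<bar>x\<bar>)) \<longlongrightarrow> L2) at_bot"
    using fY unfolding Y_space_def by blast
  define g where "g x = f x - L1 * relu (1*x+0) - L2 * relu ((-1)*x+0)" for x
  have geq: "(\<lambda>x. g x / (1 + \<bar>x\<bar>)) = (\<lambda>x. f x / (1 + \<bar>x\<bar>) - L1 * (relu (1*x+0) / (1 + \<bar>x\<bar>)) - L2 * (relu ((-1)*x+0) / (1 + \<bar>x\<bar>)))"
    by (simp add: g_def fun_eq_iff diff_divide_distrib)
  have "((\<lambda>x. g x / (1 + \<bar>x\<bar>)) \<longlongrightarrow> L1 - L1 * max 1 0 - L2 * max (-1) 0) at_top"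
    unfolding geq by (intro tendsto_intros l1 relu_lim_top) simp_all
  then have gt: "((\<lambda>x. g x / (1 + \<bar>x\<bar>)) \<longlongrightarrow> 0) at_top" by simp
  have "((\<lambda>x. g x / (1 + \<bar>x\<bar>)) \<longlongrightarrow> L2 - L1 * max (-1) 0 - L2 * max (-(-1)) 0) at_bot"
    unfolding geq by (intro tendsto_intros l2 relu_lim_bot) simp_all
  then have gb: "((\<lambda>x. g x / (1 + \<bar>x\<bar>)) \<longlongrightarrow> 0) at_bot" by simp
  define \<eta> where "\<eta> = \<epsilon> / 4"
  have eta: "\<eta> > 0" using ep unfolding \<eta>_def by simp
  have "eventually (\<lambda>x. dist (g x / (1 + \<bar>x\<bar>)) 0 < \<eta>) at_top"
    using tendsto_iff[THEN iffD1, OF gt, rule_format, OF eta] .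
  then obtain N1 where N1: "\<And>x. x \<ge> N1 \<Longrightarrow> dist (g x / (1 + \<bar>x\<bar>)) 0 < \<eta>"
    unfolding eventually_at_top_linorder by blast
  have "eventually (\<lambda>x. dist (g x / (1 + \<bar>x\<bar>)) 0 < \<eta>) at_bot"
    using tendsto_iff[THEN iffD1, OF gb, rule_format, OF eta] .
  then obtain N2 where N2: "\<And>x. x \<le> N2 \<Longrightarrow> dist (g x / (1 + \<bar>x\<bar>)) 0 < \<eta>"
    unfolding eventually_at_bot_linorder by blast
  define R where "R = max 1 (max N1 (-N2))"
  have R1: "R \<ge> 1" unfolding R_def by simp
  have tail: "\<bar>g x\<bar> \<le> \<eta> * (1 + \<bar>x\<bar>)" if "\<bar>x\<bar> \<ge> R" for x
  proof -
    have "x \<ge> N1 \<or> x \<le> N2" using that unfolding R_def by auto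
    then have "dist (g x / (1 + \<bar>x\<bar>)) 0 < \<eta>" using N1 N2 by blast
    then have "\<bar>g x\<bar> / (1 + \<bar>x\<bar>) < \<eta>" by (simp add: dist_real_def abs_divide)
    then show ?thesis by (simp add: divide_less_eq add_pos_nonneg less_imp_le)
  qed
  have cg: "continuous_on UNIV g" unfolding g_def[abs_def] relu_def using cf by (intro continuous_intros)
  then have "uniformly_continuous_on {-R..R} g"
    by (intro compact_uniformly_continuous) (auto intro: continuous_on_subset)
  then obtain \<delta> where dp: "\<delta> > 0" and uc: "\<And>x x'. x \<in> {-R..R} \<Longrightarrow> x' \<in> {-R..R} \<Longrightarrow> dist x' x < \<delta> \<Longrightarrow> dist (g x') (g x) < \<eta>"
    unfolding uniformly_continuous_on_def using eta by metis
  define N :: nat where "N = nat \<lceil>2*R/\<delta>\<rceil> + 1"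
  have Npos: "real N > 0" unfolding N_def by simp
  have "2*R/\<delta> < real N" unfolding N_def by linarith
  then have "2*R < \<delta> * real N" using dp by (simp add: divide_less_eq mult.commute)
  define d where "d = 2*R / real N"
  have dpos: "d > 0" unfolding d_def using Npos R1 by simp
  have dd: "d < \<delta>" unfolding d_def using Npos \<open>2*R < \<delta> * real N\<close> by (simp add: divide_less_eq mult.commute)
  have end_: "-R + real N * d = R" unfolding d_def using Npos by simp
  have "\<forall>x y. -R \<le> x \<and> x \<le> -R + real N * d \<and> -R \<le> y \<and> y \<le> -R + real N * d \<and> \<bar>x - y\<bar> \<le> d \<longrightarrow> \<bar>g x - g y\<bar> \<le> \<eta>"
  proof (intro allI impI)
    fix x y assume a: "-R \<le> x \<and> x \<le> -R + real N * d \<and> -R \<le> y \<and> y \<le> -R + real N * d \<and> \<bar>x - y\<bar> \<le> d"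
    then have "dist (g x) (g y) < \<eta>" using uc[of y x] dd unfolding end_ by (auto simp: dist_real_def)
    then show "\<bar>g x - g y\<bar> \<le> \<eta>" by (simp add: dist_real_def)
  qed
  from interp[OF dpos this] obtain p where pX: "p \<in> ReLU_X" and p1: "\<forall>x\<le>-R. p x = g (-R)"
    and p2: "\<forall>x\<ge>R. p x = g R" and p3: "\<forall>x. -R \<le> x \<and> x \<le> R \<longrightarrow> \<bar>p x - g x\<bar> \<le> \<eta>"
    unfolding end_ by blast
  define h where "h = (\<lambda>x. (\<lambda>x. p x + (\<lambda>x. L1 * relu (1*x+0)) x) x + (\<lambda>x. L2 * relu ((-1)*x+0)) x)"
  have hX: "h \<in> ReLU_X" unfolding h_def by (intro X_add pX X_scale X_relu) simp_all
  have fh: "f x - h x = g x - p x" for x unfolding h_def g_def by simp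
  have bnd: "\<bar>g x - p x\<bar> \<le> 2 * \<eta> * (1 + \<bar>x\<bar>)" for x
  proof -
    consider "x \<le> -R" | "x \<ge> R" | "-R \<le> x \<and> x \<le> R" by linarith
    then show ?thesis
    proof cases
      case 1
      have "\<bar>g x - p x\<bar> \<le> \<bar>g x\<bar> + \<bar>g (-R)\<bar>" using p1 1 by simp
      also have "\<dots> \<le> \<eta> * (1 + \<bar>x\<bar>) + \<eta> * (1 + \<bar>-R\<bar>)"
        using tail[of x] tail[of "-R"] 1 R1 by (intro add_mono) auto
      also have "\<dots> \<le> 2 * \<eta> * (1 + \<bar>x\<bar>)"
      proof -
        have "\<eta> * (1 + \<bar>-R\<bar>) \<le> \<eta> * (1 + \<bar>x\<bar>)" using 1 R1 eta by (intro mult_left_mono) auto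
        then show ?thesis by (simp add: algebra_simps)
      qed
      finally show ?thesis .
    next
      case 2
      have "\<bar>g x - p x\<bar> \<le> \<bar>g x\<bar> + \<bar>g R\<bar>" using p2 2 by simp
      also have "\<dots> \<le> \<eta> * (1 + \<bar>x\<bar>) + \<eta> * (1 + \<bar>R\<bar>)"
        using tail[of x] tail[of "R"] 2 R1 by (intro add_mono) auto
      also have "\<dots> \<le> 2 * \<eta> * (1 + \<bar>x\<bar>)"
      proof -
        have "\<eta> * (1 + \<bar>R\<bar>) \<le> \<eta> * (1 + \<bar>x\<bar>)" using 2 R1 eta by (intro mult_left_mono) auto
        then show ?thesis by (simp add: algebra_simps)
      qed
      finally show ?thesis .
    next
      case 3
      then have "\<bar>g x - p x\<bar> \<le> \<eta>" using p3 by (simp add: abs_minus_commute)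
      also have "\<dots> \<le> 2 * \<eta> * (1 + \<bar>x\<bar>)"
      proof -
        have "\<eta> * 1 \<le> \<eta> * (2 * (1 + \<bar>x\<bar>))" using eta by (intro mult_left_mono) auto
        then show ?thesis by (simp add: algebra_simps)
      qed
      finally show ?thesis .
    qed
  qed
  have "Y_norm (\<lambda>x. f x - h x) \<le> 2 * \<eta>"
    unfolding Y_norm_def fh
  proof (rule cSUP_least)
    fix x :: real
    have "0 < 1 + \<bar>x\<bar>" by (simp add: add_pos_nonneg)
    then show "\<bar>g x - p x\<bar> / (1 + \<bar>x\<bar>) \<le> 2 * \<eta>" using bnd[of x] by (simp add: divide_le_eq)
  qed simp
  also have "\<dots> < \<epsilon>" unfolding \<eta>_def using ep by simp
  finally have "Y_norm (\<lambda>x. f x - h x) < \<epsilon>" .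
  then show ?thesis using hX by (intro bexI[of _ h])
qed

theorem theorem1p1:
  shows "ReLU_X \<subseteq> Y_space \<and>
    (\<forall>f\<in>Y_space. \<forall>\<epsilon>>0. \<exists>h\<in>ReLU_X. Y_norm (\<lambda>x. f x - h x) < \<epsilon>)"
proof (intro conjI ballI allI impI)
  show "ReLU_X \<subseteq> Y_space" by (rule X_sub_Y)
next
  fix f :: "real \<Rightarrow> real" and \<epsilon> :: real
  assume "f \<in> Y_space" "\<epsilon> > 0"
  then show "\<exists>h\<in>ReLU_X. Y_norm (\<lambda>x. f x - h x) < \<epsilon>" by (rule dense)
qed

end
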